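(* Suppose $h_{ij}=h$ for all $i\in\mathcal{M}$, $j\in\mathcal{N}$ (for a constant $h>0$). Then the set of Nash equilibria of the finite game with players $\mathcal{M}$, action set $\mathcal{N}$ and tolled costs $\bar c_i(\mathbf{a})=\sum_{l\in\mathcal{M}_{a_i}(\mathbf{a})}\frac{\sigma^2}{h_{la_i}}\frac{\beta_l}{[1-S_i(\mathbf{a})]^+}-\sum_{l\in\mathcal{M}_{a_i}(\mathbf{a})\setminus\{i\}}\frac{\sigma^2}{h_{la_i}}\frac{\beta_l}{[1-S_i(\mathbf{a})+\beta_i]^+}$ coincides with the set of Nash equilibria of the game with the same players and actions and costs $c_i(\mathbf{a})=\frac{\sigma^2}{h_{ia_i}}\frac{\beta_i}{[1-S_i(\mathbf{a})]^+}$, where $S_i(\mathbf{a})=\sum_{k\in\mathcal{M}_{a_i}(\mathbf{a})}\beta_k$.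
   Context: Uplink cellular model: mobiles $\mathcal{M}=\{1,\dots,M\}$, BSs $\mathcal{N}=\{1,\dots,N\}$, power gains $h_{ij}>0$, noise power $\sigma^2>0$, target SINRs $\gamma_i>0$, $\beta_i=\gamma_i/(1+\gamma_i)$. Association profile $\mathbf{a}\in\mathcal{N}^M$, $\mathcal{M}_j(\mathbf{a})=\{l: a_l=j\}$, $[x]^+=\max(x,0)$, positive$/0=+\infty$, and $\bar c_i(\mathbf{a})=+\infty$ whenever its first sum is infinite. $(b,\mathbf{a}_{-i})$ replaces $a_i$ by $b$. For a game with costs $d_i$, $\mathbf{a}$ is a Nash equilibrium if $a_i\in\arg\min_{b\in\mathcal{N}}d_i(b,\mathbf{a}_{-i})$ for all $i$. Standing assumption: there exists at least one feasible association, i.e. some $\mathbf{a}$ with $\sum_{l\in\mathcal{M}_j(\mathbf{a})}\beta_l<1$ for all $j$. *)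

theory Defs
  imports "HOL-Analysis.Analysis" "HOL-Library.Extended_Real"
begin

text \<open>Mobiles are the elements of a finite type 'm, base stations those of a finite type 'n.
  An association profile is a function a :: 'm => 'n.  Costs take values in ereal.\<close>

definition cell :: "('m \<Rightarrow> 'n) \<Rightarrow> 'n \<Rightarrow> 'm set" where
  "cell a j = {l. a l = j}"

definition load :: "('m \<Rightarrow> real) \<Rightarrow> ('m \<Rightarrow> 'n) \<Rightarrow> 'm \<Rightarrow> real" where
  "load \<beta> a i = (\<Sum>k\<in>cell a (a i). \<beta> k)"

definition pdiv :: "real \<Rightarrow> real \<Rightarrow> ereal" where
  "pdiv x y = (if max y 0 = 0 then PInfty else ereal (x / max y 0))"

definition cost_c :: "real \<Rightarrow> ('m \<Rightarrow> 'n \<Rightarrow> real) \<Rightarrow> ('m \<Rightarrow> real) \<Rightarrow> ('m \<Rightarrow> 'n) \<Rightarrow> 'm \<Rightarrow> ereal" where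
  "cost_c sig2 h \<beta> a i = pdiv (sig2 / h i (a i) * \<beta> i) (1 - load \<beta> a i)"

definition cost_tolled :: "real \<Rightarrow> ('m \<Rightarrow> 'n \<Rightarrow> real) \<Rightarrow> ('m \<Rightarrow> real) \<Rightarrow> ('m \<Rightarrow> 'n) \<Rightarrow> 'm \<Rightarrow> ereal" where
  "cost_tolled sig2 h \<beta> a i =
     (let F = (\<Sum>l\<in>cell a (a i). pdiv (sig2 / h l (a i) * \<beta> l) (1 - load \<beta> a i))
      in if F = PInfty then PInfty
         else F - (\<Sum>l\<in>cell a (a i) - {i}. pdiv (sig2 / h l (a i) * \<beta> l) (1 - load \<beta> a i + \<beta> i)))"

definition nash_eq :: "(('m \<Rightarrow> 'n) \<Rightarrow> 'm \<Rightarrow> ereal) \<Rightarrow> ('m \<Rightarrow> 'n) \<Rightarrow> bool" where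
  "nash_eq d a \<longleftrightarrow> (\<forall>i. \<forall>b. d a i \<le> d (a(i := b)) i)"

end

theory Submission
  imports Defs
begin

lemma load_split:
  fixes a :: "'m::finite \<Rightarrow> 'n"
  shows "load \<beta> a i = \<beta> i + (\<Sum>l\<in>cell a (a i) - {i}. \<beta> l)"
proof -
  have "i \<in> cell a (a i)" by (simp add: cell_def)
  then show ?thesis unfolding load_def by (simp add: sum.remove)
qed

lemma cost_c_form:
  fixes a :: "'m::finite \<Rightarrow> 'n"
  assumes "\<And>i j. h i j = hc" "K = sig2 / hc"
  shows "cost_c sig2 h \<beta> a i = (if load \<beta> a i < 1 then ereal (K * \<beta> i / (1 - load \<beta> a i)) else PInfty)"
  using assms unfolding cost_c_def pdiv_def by (auto simp: max_def)

lemma cost_t_form: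
  fixes a :: "'m::finite \<Rightarrow> 'n"
  assumes "\<And>i j. h i j = hc" "K = sig2 / hc" "\<And>l. \<beta> l > 0"
  shows "cost_tolled sig2 h \<beta> a i = (if load \<beta> a i < 1 then
     ereal (K * \<beta> i / ((1 - load \<beta> a i) * (1 - (load \<beta> a i - \<beta> i)))) else PInfty)"
proof -
  define S where "S = load \<beta> a i"
  define C where "C = cell a (a i)"
  have iC: "i \<in> C" by (simp add: C_def cell_def)
  have fin: "finite C" by simp
  have SC: "S = (\<Sum>l\<in>C. \<beta> l)" by (simp add: S_def C_def load_def)
  have SC2: "S = \<beta> i + (\<Sum>l\<in>C - {i}. \<beta> l)" using load_split[of \<beta> a i] by (simp add: S_def C_def)
  show ?thesis
  proof (cases "S < 1")
    case False
    then have "(\<Sum>l\<in>C. pdiv (sig2 / h l (a i) * \<beta> l) (1 - S)) = (\<Sum>l\<in>C. PInfty)"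
      by (intro sum.cong) (auto simp: pdiv_def max_def)
    also have "\<dots> = PInfty"
    proof -
      have "(\<Sum>l\<in>C. (\<infinity>::ereal)) = \<infinity>"
      proof -
        have "finite C \<and> (\<exists>i\<in>C. (\<infinity>::ereal) = \<infinity>)" using iC fin by blast
        then show ?thesis by (simp only: sum_Pinfty)
      qed
      then show ?thesis by (simp only: PInfty_eq_infinity)
    qed
    finally show ?thesis using False unfolding cost_tolled_def S_def C_def by (simp add: Let_def)
  next
    case True
    have bi: "\<beta> i > 0" using assms(3) .
    have "(\<Sum>l\<in>C. pdiv (sig2 / h l (a i) * \<beta> l) (1 - S)) = (\<Sum>l\<in>C. ereal (K * \<beta> l / (1 - S)))"
      using True assms(1,2) by (intro sum.cong) (auto simp: pdiv_def max_def)
    also have "\<dots> = ereal (\<Sum>l\<in>C. K * \<beta> l / (1 - S))" by simp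
    also have "(\<Sum>l\<in>C. K * \<beta> l / (1 - S)) = K * S / (1 - S)"
      by (simp add: SC sum_divide_distrib[symmetric] sum_distrib_left)
    finally have F: "(\<Sum>l\<in>C. pdiv (sig2 / h l (a i) * \<beta> l) (1 - S)) = ereal (K * S / (1 - S))" .
    have pos2: "1 - S + \<beta> i > 0" using True bi by simp
    have "(\<Sum>l\<in>C - {i}. pdiv (sig2 / h l (a i) * \<beta> l) (1 - S + \<beta> i)) = (\<Sum>l\<in>C - {i}. ereal (K * \<beta> l / (1 - S + \<beta> i)))"
      using pos2 assms(1,2) by (intro sum.cong) (auto simp: pdiv_def max_def)
    also have "\<dots> = ereal (\<Sum>l\<in>C - {i}. K * \<beta> l / (1 - S + \<beta> i))" by simp
    also have "(\<Sum>l\<in>C - {i}. K * \<beta> l / (1 - S + \<beta> i)) = K * (S - \<beta> i) / (1 - S + \<beta> i)"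
      using SC2 by (simp add: sum_divide_distrib[symmetric] sum_distrib_left)
    finally have G: "(\<Sum>l\<in>C - {i}. pdiv (sig2 / h l (a i) * \<beta> l) (1 - S + \<beta> i)) = ereal (K * (S - \<beta> i) / (1 - S + \<beta> i))" .
    have pos1: "1 - S > 0" using True by simp
    have eq: "K * S / (1 - S) - K * (S - \<beta> i) / (1 - S + \<beta> i) = K * \<beta> i / ((1 - S) * (1 - (S - \<beta> i)))"
    proof -
      define A where "A = 1 - S"
      define B where "B = 1 - S + \<beta> i"
      have A0: "A \<noteq> 0" "B \<noteq> 0" using pos1 pos2 by (auto simp: A_def B_def)
      have "K * S / A - K * (S - \<beta> i) / B = K * (S * B - (S - \<beta> i) * A) / (A * B)"
        unfolding diff_frac_eq[OF A0] by (simp add: right_diff_distrib mult.assoc)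
      also have "S * B - (S - \<beta> i) * A = \<beta> i" by (simp add: A_def B_def algebra_simps)
      also have "A * B = (1 - S) * (1 - (S - \<beta> i))" by (simp add: A_def B_def)
      finally show ?thesis by (simp add: A_def B_def)
    qed
    show ?thesis unfolding cost_tolled_def Let_def
      using True F G eq by (simp add: S_def[symmetric] C_def[symmetric])
  qed
qed

lemma cmp_c:
  fixes K b S T :: real
  assumes "K > 0" "b > 0"
  shows "((if S < 1 then ereal (K * b / (1 - S)) else PInfty) \<le> (if T < 1 then ereal (K * b / (1 - T)) else PInfty))
     \<longleftrightarrow> (T \<ge> 1 \<or> S \<le> T)"
proof (cases "S < 1 \<and> T < 1")
  case True
  have kb: "K * b > 0" using assms by simp
  have "(K * b / (1 - S) \<le> K * b / (1 - T)) \<longleftrightarrow> 1 - T \<le> 1 - S"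
    using True kb by (simp add: divide_simps mult_le_cancel_left_pos)
  then show ?thesis using True by auto
qed auto

lemma cmp_t:
  fixes K b S T :: real
  assumes "K > 0" "b > 0"
  shows "((if S < 1 then ereal (K * b / ((1 - S) * (1 - (S - b)))) else PInfty) \<le>
          (if T < 1 then ereal (K * b / ((1 - T) * (1 - (T - b)))) else PInfty))
     \<longleftrightarrow> (T \<ge> 1 \<or> S \<le> T)"
proof (cases "S < 1 \<and> T < 1")
  case True
  have kb: "K * b > 0" using assms by simp
  have pa: "(1 - S) * (1 - (S - b)) > 0" "(1 - T) * (1 - (T - b)) > 0" using True assms by auto
  have "(K * b / ((1 - S) * (1 - (S - b))) \<le> K * b / ((1 - T) * (1 - (T - b))))
      \<longleftrightarrow> (1 - T) * (1 - (T - b)) \<le> (1 - S) * (1 - (S - b))"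
    using pa kb by (simp add: divide_simps mult_le_cancel_left_pos)
  also have "\<dots> \<longleftrightarrow> S \<le> T"
  proof
    assume h: "(1 - T) * (1 - (T - b)) \<le> (1 - S) * (1 - (S - b))"
    show "S \<le> T"
    proof (rule ccontr)
      assume "\<not> S \<le> T"
      then have "(1 - S) * (1 - (S - b)) < (1 - T) * (1 - (T - b))"
        using True assms by (intro mult_strict_mono) auto
      then show False using h by simp
    qed
  next
    assume "S \<le> T"
    then show "(1 - T) * (1 - (T - b)) \<le> (1 - S) * (1 - (S - b))"
      using True assms by (intro mult_mono) auto
  qed
  finally show ?thesis using True by auto
qed auto

theorem proposition16:
  fixes sig2 :: real and hc :: real
    and h :: "'m::finite \<Rightarrow> 'n::finite \<Rightarrow> real"
    and \<gamma> \<beta> :: "'m \<Rightarrow> real"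
  assumes sig2_pos: "sig2 > 0"
    and gamma_pos: "\<And>i. \<gamma> i > 0"
    and beta_def: "\<And>i. \<beta> i = \<gamma> i / (1 + \<gamma> i)"
    and hc_pos: "hc > 0"
    and h_const: "\<And>i j. h i j = hc"
    and feasible: "\<exists>a :: 'm \<Rightarrow> 'n. \<forall>j. (\<Sum>l\<in>cell a j. \<beta> l) < 1"
  shows "{a. nash_eq (cost_tolled sig2 h \<beta>) a} = {a. nash_eq (cost_c sig2 h \<beta>) a}"
proof -
  define K where "K = sig2 / hc"
  have K: "K > 0" using sig2_pos hc_pos by (simp add: K_def)
  have bp: "\<And>l. \<beta> l > 0" using gamma_pos beta_def by (simp add: add_pos_pos)
  have "\<And>a. nash_eq (cost_tolled sig2 h \<beta>) a = nash_eq (cost_c sig2 h \<beta>) a"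
    unfolding nash_eq_def
    using cost_t_form[of h hc K sig2 \<beta>, OF h_const K_def bp] cost_c_form[of h hc K sig2, OF h_const K_def]
      cmp_c[OF K bp] cmp_t[OF K bp] by simp
  then show ?thesis by simp
qed

end
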